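(* Let $Q$ be a quantity space over a field $K$. For every $x\in[1_Q]$ (the class of $1_Q$ under $\sim$), the measure $\mu_E(x)$ does not depend on the basis $E$ of $Q$.
   Context: A scalable monoid over a (unital, associative) ring $R$ is a monoid $X$ (identity $1_X$, product written $xy$) together with a map $R\times X\to X$, $(\alpha,x)\mapsto\alpha\cdot x$, such that $1\cdot x=x$, $\alpha\cdot(\beta\cdot x)=\alpha\beta\cdot x$ and $\alpha\cdot(xy)=(\alpha\cdot x)y=x(\alpha\cdot y)$. A quantity space over a field $K$ is a commutative scalable monoid $Q$ over $K$ for which there exists a basis, i.e. a finite set $E=\{e_1,\ldots,e_n\}$ of invertible elements of $Q$ such that every $x\in Q$ has a unique expansion $x=\mu\cdot\prod_{i=1}^n e_i^{k_i}$ with $\mu\in K$ and $k_i\in\mathbb{Z}$; the scalar $\mu$ is the measure $\mu_E(x)$ of $x$ relative to $E$. On $Q$, $x\sim y$ iff $\alpha\cdot x=\beta\cdot y$ for some $\alpha,\beta\in K$. *)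

theory Defs
  imports Main
begin

definition scalable_monoid ::
  "('q \<Rightarrow> 'q \<Rightarrow> 'q) \<Rightarrow> 'q \<Rightarrow> ('k::ring_1 \<Rightarrow> 'q \<Rightarrow> 'q) \<Rightarrow> bool" where
  "scalable_monoid mul one smul \<longleftrightarrow>
     (\<forall>x y z. mul (mul x y) z = mul x (mul y z)) \<and>
     (\<forall>x. mul one x = x) \<and> (\<forall>x. mul x one = x) \<and>
     (\<forall>x. smul 1 x = x) \<and>
     (\<forall>a b x. smul a (smul b x) = smul (a * b) x) \<and>
     (\<forall>a x y. smul a (mul x y) = mul (smul a x) y) \<and>
     (\<forall>a x y. smul a (mul x y) = mul x (smul a y))"

definition invertible :: "('q \<Rightarrow> 'q \<Rightarrow> 'q) \<Rightarrow> 'q \<Rightarrow> 'q \<Rightarrow> bool" where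
  "invertible mul one e \<longleftrightarrow> (\<exists>y. mul e y = one \<and> mul y e = one)"

definition inv_el :: "('q \<Rightarrow> 'q \<Rightarrow> 'q) \<Rightarrow> 'q \<Rightarrow> 'q \<Rightarrow> 'q" where
  "inv_el mul one e = (THE y. mul e y = one \<and> mul y e = one)"

primrec npow :: "('q \<Rightarrow> 'q \<Rightarrow> 'q) \<Rightarrow> 'q \<Rightarrow> 'q \<Rightarrow> nat \<Rightarrow> 'q" where
  "npow mul one e 0 = one"
| "npow mul one e (Suc n) = mul e (npow mul one e n)"

definition zpow :: "('q \<Rightarrow> 'q \<Rightarrow> 'q) \<Rightarrow> 'q \<Rightarrow> 'q \<Rightarrow> int \<Rightarrow> 'q" where
  "zpow mul one e k =
     (if 0 \<le> k then npow mul one e (nat k) else npow mul one (inv_el mul one e) (nat (- k)))"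

text \<open>The product \<open>\<prod>_{e\<in>E} e^{k e}\<close> (well defined in a commutative monoid).\<close>
definition qprod :: "('q \<Rightarrow> 'q \<Rightarrow> 'q) \<Rightarrow> 'q \<Rightarrow> 'q set \<Rightarrow> ('q \<Rightarrow> int) \<Rightarrow> 'q" where
  "qprod mul one E k = Finite_Set.fold (\<lambda>e acc. mul (zpow mul one e (k e)) acc) one E"

text \<open>Exponent vectors are functions \<open>E \<rightarrow> \<int>\<close>, normalised to 0 outside \<open>E\<close>.\<close>
definition expvec :: "'q set \<Rightarrow> ('q \<Rightarrow> int) \<Rightarrow> bool" where
  "expvec E k \<longleftrightarrow> (\<forall>e. e \<notin> E \<longrightarrow> k e = 0)"

definition is_basis ::
  "('q \<Rightarrow> 'q \<Rightarrow> 'q) \<Rightarrow> 'q \<Rightarrow> ('k \<Rightarrow> 'q \<Rightarrow> 'q) \<Rightarrow> 'q set \<Rightarrow> bool" where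
  "is_basis mul one smul E \<longleftrightarrow>
     finite E \<and> (\<forall>e\<in>E. invertible mul one e) \<and>
     (\<forall>x. \<exists>!(\<mu>, k). expvec E k \<and> x = smul \<mu> (qprod mul one E k))"

definition quantity_space ::
  "('q \<Rightarrow> 'q \<Rightarrow> 'q) \<Rightarrow> 'q \<Rightarrow> ('k::field \<Rightarrow> 'q \<Rightarrow> 'q) \<Rightarrow> bool" where
  "quantity_space mul one smul \<longleftrightarrow>
     scalable_monoid mul one smul \<and> (\<forall>x y. mul x y = mul y x) \<and>
     (\<exists>E. is_basis mul one smul E)"

definition qmeasure ::
  "('q \<Rightarrow> 'q \<Rightarrow> 'q) \<Rightarrow> 'q \<Rightarrow> ('k \<Rightarrow> 'q \<Rightarrow> 'q) \<Rightarrow> 'q set \<Rightarrow> 'q \<Rightarrow> 'k" where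
  "qmeasure mul one smul E x =
     (THE \<mu>. \<exists>k. expvec E k \<and> x = smul \<mu> (qprod mul one E k))"

definition qsim :: "('k \<Rightarrow> 'q \<Rightarrow> 'q) \<Rightarrow> 'q \<Rightarrow> 'q \<Rightarrow> bool" where
  "qsim smul x y \<longleftrightarrow> (\<exists>\<alpha> \<beta>. smul \<alpha> x = smul \<beta> y)"

end

theory Submission
  imports Defs
begin

lemma qprod_zero:
  assumes "\<forall>x. mul one x = x"
  shows "qprod mul one E (\<lambda>_. 0) = one"
proof -
  have f: "(\<lambda>e acc. mul (zpow mul one e ((\<lambda>_. 0::int) e)) acc) = (\<lambda>e acc. acc)"
    using assms by (auto simp: zpow_def fun_eq_iff)
  interpret comp_fun_commute "\<lambda>(e::'a) (acc::'a). acc" by unfold_locales auto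
  have "Finite_Set.fold (\<lambda>e acc. acc) one E = one"
  proof (cases "finite E")
    case True then show ?thesis by (induction E rule: finite_induct) auto
  qed simp
  then show ?thesis unfolding qprod_def f .
qed

lemma uniq2:
  assumes "\<exists>!(\<mu>, k). P \<mu> k"
    and "P a b" and "P c d"
  shows "a = c \<and> b = d"
  using assms by (smt (verit) case_prodI2 prod.inject the1_equality)

lemma meas_one:
  fixes smul :: "'k::field \<Rightarrow> 'q \<Rightarrow> 'q"
  assumes sm: "scalable_monoid mul one smul" and b: "is_basis mul one smul E"
    and q: "qsim smul x one"
  shows "\<exists>\<mu>. x = smul \<mu> one \<and> qmeasure mul one smul E x = \<mu>"
proof -
  have one: "\<forall>x. mul one x = x" and as: "\<forall>a b x. smul a (smul b x) = smul (a * b) x"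
    using sm by (auto simp: scalable_monoid_def)
  have q0: "qprod mul one E (\<lambda>_. 0) = one" using qprod_zero[of mul one] one by blast
  have e0: "expvec E (\<lambda>_. 0)" by (simp add: expvec_def)
  have uniq: "\<And>y. \<exists>!(\<mu>, k). expvec E k \<and> y = smul \<mu> (qprod mul one E k)"
    using b by (auto simp: is_basis_def)
  obtain \<mu> k where k: "expvec E k" "x = smul \<mu> (qprod mul one E k)"
    using uniq[of x] by auto
  obtain \<alpha> \<beta> where ab: "smul \<alpha> x = smul \<beta> one" using q by (auto simp: qsim_def)
  have "smul \<alpha> x = smul (\<alpha> * \<mu>) (qprod mul one E k)" using k as by simp
  moreover have "smul \<alpha> x = smul \<beta> (qprod mul one E (\<lambda>_. 0))" using ab q0 by simp
  ultimately have "(\<alpha> * \<mu>, k) = (\<beta>, (\<lambda>_. 0::int))"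
    using uniq2[OF uniq[of "smul \<alpha> x"], where a="\<alpha> * \<mu>" and b=k and c=\<beta> and d="\<lambda>_. 0"] k(1) e0 \<open>smul \<alpha> x = smul (\<alpha> * \<mu>) (qprod mul one E k)\<close> \<open>smul \<alpha> x = smul \<beta> (qprod mul one E (\<lambda>_. 0))\<close> by blast
  then have k0: "k = (\<lambda>_. 0)" by simp
  have x: "x = smul \<mu> one" using k k0 q0 by simp
  have "qmeasure mul one smul E x = \<mu>"
    unfolding qmeasure_def
  proof (rule the_equality)
    show "\<exists>k. expvec E k \<and> x = smul \<mu> (qprod mul one E k)" using k by blast
  next
    fix \<nu> assume "\<exists>k. expvec E k \<and> x = smul \<nu> (qprod mul one E k)"
    then obtain k' where "expvec E k'" "x = smul \<nu> (qprod mul one E k')" by blast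
    then show "\<nu> = \<mu>" using uniq2[OF uniq[of x], where a=\<nu> and b=k' and c=\<mu> and d=k] k by blast
  qed
  then show ?thesis using x by blast
qed

theorem proposition3p16:
  fixes mul :: "'q \<Rightarrow> 'q \<Rightarrow> 'q" and one :: 'q and smul :: "'k::field \<Rightarrow> 'q \<Rightarrow> 'q"
  assumes "quantity_space mul one smul"
    and "is_basis mul one smul E" and "is_basis mul one smul E'"
    and "qsim smul x one"
  shows "qmeasure mul one smul E x = qmeasure mul one smul E' x"
proof -
  have sm: "scalable_monoid mul one smul" using assms(1) by (simp add: quantity_space_def)
  obtain \<mu> where m: "x = smul \<mu> one" "qmeasure mul one smul E x = \<mu>"
    using meas_one[OF sm assms(2,4)] by blast
  obtain \<nu> where n: "x = smul \<nu> one" "qmeasure mul one smul E' x = \<nu>"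
    using meas_one[OF sm assms(3,4)] by blast
  have one: "\<forall>x. mul one x = x" using sm by (simp add: scalable_monoid_def)
  have q0: "qprod mul one E (\<lambda>_. 0) = one" using qprod_zero[of mul one] one by blast
  have e0: "expvec E (\<lambda>_. 0)" by (simp add: expvec_def)
  have uniq: "\<exists>!(\<mu>, k). expvec E k \<and> x = smul \<mu> (qprod mul one E k)"
    using assms(2) by (auto simp: is_basis_def)
  have "\<mu> = \<nu>" using uniq2[OF uniq, where a=\<mu> and b="\<lambda>_. 0" and c=\<nu> and d="\<lambda>_. 0"] m(1) n(1) q0 e0 by metis
  then show ?thesis using m n by simp
qed

end
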